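(* Let $A$ be a $d$-dimensional polystochastic matrix of order $n\ge 2$. Suppose there are subsets $S_1,\dots,S_d\subseteq\{0,\dots,n-1\}$ with $|S_i|=n-1$ such that $a_\alpha\in\{0,1\}$ for all $\alpha\in S_1\times\dots\times S_d$. Then $A$ is a multidimensional permutation, i.e. all entries of $A$ are in $\{0,1\}$.
   Context: $A=(a_\alpha)_{\alpha\in\{0,\dots,n-1\}^d}$ is polystochastic if nonnegative and every line (set of indices obtained by fixing all coordinates but one) sums to $1$. A multidimensional permutation is a polystochastic $(0,1)$-matrix. *)

theory Defs
  imports "HOL-Library.FuncSet" Complex_Main
begin

definition indices :: "nat \<Rightarrow> nat \<Rightarrow> (nat \<Rightarrow> nat) set" where
  "indices d n = PiE {..<d} (\<lambda>_. {..<n})"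

definition polystochastic :: "nat \<Rightarrow> nat \<Rightarrow> ((nat \<Rightarrow> nat) \<Rightarrow> real) \<Rightarrow> bool" where
  "polystochastic d n A \<longleftrightarrow>
     (\<forall>\<alpha>\<in>indices d n. A \<alpha> \<ge> 0) \<and>
     (\<forall>i<d. \<forall>\<alpha>\<in>indices d n. (\<Sum>j<n. A (\<alpha>(i := j))) = 1)"

definition multidim_permutation :: "nat \<Rightarrow> nat \<Rightarrow> ((nat \<Rightarrow> nat) \<Rightarrow> real) \<Rightarrow> bool" where
  "multidim_permutation d n A \<longleftrightarrow>
     polystochastic d n A \<and> (\<forall>\<alpha>\<in>indices d n. A \<alpha> \<in> {0, 1})"

end

theory Submission
  imports Defs
begin

lemma key01:
  fixes x :: real and f :: "'b \<Rightarrow> real"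
  assumes "finite B" "x \<ge> 0" "x + sum f B = 1" "\<forall>b\<in>B. f b \<in> {0,1}"
  shows "x \<in> {0,1}"
proof (cases "\<exists>b\<in>B. f b = 1")
  case True
  then obtain b where b: "b \<in> B" "f b = 1" by blast
  have "f b \<le> sum f B"
    by (rule member_le_sum) (use assms b in auto)
  then show ?thesis using assms b by auto
next
  case False
  then have "\<forall>b\<in>B. f b = 0" using assms(4) by auto
  then have "sum f B = 0" by simp
  then show ?thesis using assms by auto
qed

theorem mainTheorem8:
  fixes d n :: nat and A :: "(nat \<Rightarrow> nat) \<Rightarrow> real" and S :: "nat \<Rightarrow> nat set"
  assumes "n \<ge> 2"
    and "polystochastic d n A"
    and "\<And>i. i < d \<Longrightarrow> S i \<subseteq> {..<n} \<and> card (S i) = n - 1"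
    and "\<And>\<alpha>. \<alpha> \<in> PiE {..<d} S \<Longrightarrow> A \<alpha> \<in> {0, 1}"
  shows "multidim_permutation d n A"
proof -
  have nonneg: "\<And>\<alpha>. \<alpha> \<in> indices d n \<Longrightarrow> A \<alpha> \<ge> 0"
    and line: "\<And>i \<alpha>. i < d \<Longrightarrow> \<alpha> \<in> indices d n \<Longrightarrow> (\<Sum>j<n. A (\<alpha>(i := j))) = 1"
    using assms(2) unfolding polystochastic_def by auto
  have main: "\<forall>\<alpha>. \<alpha> \<in> indices d n \<longrightarrow> card {i\<in>{..<d}. \<alpha> i \<notin> S i} = m \<longrightarrow> A \<alpha> \<in> {0,1}" for m
  proof (induction m rule: less_induct)
    case (less m)
    show ?case
    proof (intro allI impI)
      fix \<alpha> assume a: "\<alpha> \<in> indices d n" and c: "card {i\<in>{..<d}. \<alpha> i \<notin> S i} = m"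
      show "A \<alpha> \<in> {0,1}"
      proof (cases "m = 0")
        case True
        then have "{i\<in>{..<d}. \<alpha> i \<notin> S i} = {}" using c by simp
        then have "\<alpha> \<in> PiE {..<d} S" using a unfolding indices_def PiE_iff by auto
        then show ?thesis using assms(4) by blast
      next
        case False
        then obtain i where i: "i < d" "\<alpha> i \<notin> S i" using c
          by (metis (no_types, lifting) card.empty empty_Collect_eq lessThan_iff)
        have ai: "\<alpha> i < n" using a i unfolding indices_def by auto
        have Si: "S i \<subseteq> {..<n}" "card (S i) = n - 1" using assms(3) i by auto
        have inS: "j \<in> S i" if "j < n" "j \<noteq> \<alpha> i" for j
        proof (rule ccontr)
          assume "j \<notin> S i"
          have fin: "finite (S i)" using Si finite_subset by blast
          have "card (insert (\<alpha> i) (insert j (S i))) = n + 1"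
            using \<open>j \<notin> S i\<close> i(2) that(2) fin Si(2) assms(1) by simp
          moreover have "insert (\<alpha> i) (insert j (S i)) \<subseteq> {..<n}" using Si ai that by auto
          hence "card (insert (\<alpha> i) (insert j (S i))) \<le> n"
            by (metis card_lessThan card_mono finite_lessThan)
          ultimately show False by simp
        qed
        have rest: "A (\<alpha>(i := j)) \<in> {0,1}" if "j \<in> {..<n} - {\<alpha> i}" for j
        proof -
          have jS: "j \<in> S i" using inS that by auto
          have bi: "\<alpha>(i := j) \<in> indices d n" using a i that unfolding indices_def PiE_iff extensional_def by auto
          have "{k\<in>{..<d}. (\<alpha>(i := j)) k \<notin> S k} = {k\<in>{..<d}. \<alpha> k \<notin> S k} - {i}"
            using jS by auto
          then have "card {k\<in>{..<d}. (\<alpha>(i := j)) k \<notin> S k} = m - 1"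
            using c i by simp
          moreover have "m - 1 < m" using False by simp
          ultimately show ?thesis using less bi by blast
        qed
        have "(\<Sum>j<n. A (\<alpha>(i := j))) = A (\<alpha>(i := \<alpha> i)) + (\<Sum>j\<in>{..<n} - {\<alpha> i}. A (\<alpha>(i := j)))"
          using ai by (simp add: sum.remove)
        then have "A \<alpha> + (\<Sum>j\<in>{..<n} - {\<alpha> i}. A (\<alpha>(i := j))) = 1"
          using line[OF i(1) a] by simp
        then show ?thesis using key01[of "{..<n} - {\<alpha> i}" "A \<alpha>"] nonneg[OF a] rest by auto
      qed
    qed
  qed
  show ?thesis unfolding multidim_permutation_def using assms(2) main by blast
qed

end
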